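(* Let $(A,v)\in\mathfrak g\times V$ satisfy $\langle A^kv,v\rangle=0$ for all integers $k\ge0$. Then: (i) if $\mathfrak g=\mathfrak u$ or $\mathfrak g=\mathfrak{sp}$, then for every $\lambda\in\mathbb{K}$ (required to satisfy $\bar\lambda=-\lambda$ in the case $\mathfrak u$) the operator $A+\lambda\phi_v$ has the same characteristic polynomial as $A$; (ii) if $\mathfrak g=\mathfrak o$, then for every $\lambda\in\mathbb{F}$ the operator $A+\lambda A\phi_v+\lambda\phi_vA$ has the same characteristic polynomial as $A$.
   Context: $\mathbb{K}=\mathbb{F}$ or a quadratic extension of a field $\mathbb{F}$ of characteristic $\neq2$, with conjugation $\lambda\mapsto\bar\lambda$. $V$ is a finite-dimensional $\mathbb{K}$-space with a non-degenerate form $\langle\cdot,\cdot\rangle$ (linear in the first variable) which is symmetric ($\mathfrak g=\mathfrak o$), Hermitian ($\mathfrak g=\mathfrak u$) or symplectic ($\mathfrak g=\mathfrak{sp}$), and $\mathfrak g=\{A:A^*=-A\}$. For $v\in V$, $\phi_v$ is the operator $u\mapsto\langle u,v\rangle v$. *)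

theory Defs
  imports "Jordan_Normal_Form.Char_Poly"
begin

text \<open>V = K^n (column vectors), the form is given by a Gram matrix G:
  form G cj u v = u^T G conj(v), linear in the first variable,
  conjugate-linear in the second.\<close>

definition form :: "('a::field) mat \<Rightarrow> ('a \<Rightarrow> 'a) \<Rightarrow> 'a vec \<Rightarrow> 'a vec \<Rightarrow> 'a" where
  "form G cj u v = u \<bullet> (G *\<^sub>v map_vec cj v)"

text \<open>A field involution (conjugation); identity means K = F.\<close>
definition conjugation :: "('a::field \<Rightarrow> 'a) \<Rightarrow> bool" where
  "conjugation cj \<longleftrightarrow> (\<forall>x y. cj (x + y) = cj x + cj y) \<and> (\<forall>x y. cj (x * y) = cj x * cj y)
     \<and> cj 1 = 1 \<and> (\<forall>x. cj (cj x) = x)"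

definition nondegenerate :: "nat \<Rightarrow> ('a::field) mat \<Rightarrow> ('a \<Rightarrow> 'a) \<Rightarrow> bool" where
  "nondegenerate n G cj \<longleftrightarrow>
     (\<forall>u\<in>carrier_vec n. (\<forall>w\<in>carrier_vec n. form G cj u w = 0) \<longrightarrow> u = 0\<^sub>v n)"

definition in_g :: "nat \<Rightarrow> ('a::field) mat \<Rightarrow> ('a \<Rightarrow> 'a) \<Rightarrow> 'a mat \<Rightarrow> bool" where
  "in_g n G cj A \<longleftrightarrow> A \<in> carrier_mat n n \<and>
     (\<forall>u\<in>carrier_vec n. \<forall>w\<in>carrier_vec n. form G cj (A *\<^sub>v u) w = - form G cj u (A *\<^sub>v w))"

definition phi :: "nat \<Rightarrow> ('a::field) mat \<Rightarrow> ('a \<Rightarrow> 'a) \<Rightarrow> 'a vec \<Rightarrow> 'a mat" where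
  "phi n G cj v = mat n n (\<lambda>(i,j). form G cj (unit_vec n j) v * v $ i)"

end

theory Submission
  imports Defs
begin


definition rk :: "nat \<Rightarrow> 'a::comm_ring_1 vec \<Rightarrow> 'a vec \<Rightarrow> 'a mat" where
  "rk n a b = mat n n (\<lambda>(i,j). a $ i * b $ j)"
definition rowm :: "nat \<Rightarrow> 'a::comm_ring_1 vec \<Rightarrow> 'a mat" where
  "rowm n b = mat 1 n (\<lambda>(i,j). b $ j)"
definition colm :: "nat \<Rightarrow> 'a::comm_ring_1 vec \<Rightarrow> 'a mat" where
  "colm n a = mat n 1 (\<lambda>(i,j). a $ i)"

lemma rk_carrier[simp]: "rk n a b \<in> carrier_mat n n" by (simp add: rk_def)
lemma rowm_carrier[simp]: "rowm n b \<in> carrier_mat 1 n" by (simp add: rowm_def)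
lemma colm_carrier[simp]: "colm n a \<in> carrier_mat n 1" by (simp add: colm_def)
lemma rowm_carrier'[simp]: "rowm n b \<in> carrier_mat (Suc 0) n" by (simp add: rowm_def)
lemma colm_carrier'[simp]: "colm n a \<in> carrier_mat n (Suc 0)" by (simp add: colm_def)

lemma F1:
  fixes M :: "'a::comm_ring_1 mat"
  assumes M: "M \<in> carrier_mat n n" and a: "a \<in> carrier_vec n" and b: "b \<in> carrier_vec n"
  shows "four_block_mat (1\<^sub>m 1) (- rowm n b) (colm n a) M =
    four_block_mat (1\<^sub>m 1) (0\<^sub>m 1 n) (colm n a) (M + rk n a b) * four_block_mat (1\<^sub>m 1) (- rowm n b) (0\<^sub>m n 1) (1\<^sub>m n)"
proof -
  have "four_block_mat (1\<^sub>m 1) (0\<^sub>m 1 n) (colm n a) (M + rk n a b) * four_block_mat (1\<^sub>m 1) (- rowm n b) (0\<^sub>m n 1) (1\<^sub>m n)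
    = four_block_mat (1\<^sub>m 1 * 1\<^sub>m 1 + 0\<^sub>m 1 n * 0\<^sub>m n 1) (1\<^sub>m 1 * (- rowm n b) + 0\<^sub>m 1 n * 1\<^sub>m n)
        (colm n a * 1\<^sub>m 1 + (M + rk n a b) * 0\<^sub>m n 1) (colm n a * (- rowm n b) + (M + rk n a b) * 1\<^sub>m n)"
    by (rule mult_four_block_mat[where ?nr2.0=n], insert M, auto)
  also have "\<dots> = four_block_mat (1\<^sub>m 1) (- rowm n b) (colm n a) M"
  proof (rule cong_four_block_mat)
    show "colm n a * (- rowm n b) + (M + rk n a b) * 1\<^sub>m n = M"
      by (rule eq_matI, insert M, auto simp: scalar_prod_def rk_def rowm_def colm_def)
  qed (rule eq_matI, insert M, auto simp: scalar_prod_def rk_def rowm_def colm_def)+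
  finally show ?thesis by simp
qed

lemma mult_colm: assumes M: "M \<in> carrier_mat n n" and x: "x \<in> carrier_vec n"
  shows "M * colm n x = colm n (M *\<^sub>v x)"
  by (rule eq_matI, insert M x, auto simp: colm_def scalar_prod_def col_def)

lemma F2:
  fixes M :: "'a::comm_ring_1 mat"
  assumes M: "M \<in> carrier_mat n n" and a: "a \<in> carrier_vec n" and b: "b \<in> carrier_vec n"
  and y: "b \<bullet> (adj_mat M *\<^sub>v a) = 0"
  shows "four_block_mat (1\<^sub>m 1) (- rowm n b) (colm n a) M *
     four_block_mat (det M \<cdot>\<^sub>m 1\<^sub>m 1) (0\<^sub>m 1 n) (- colm n (adj_mat M *\<^sub>v a)) (adj_mat M)
   = four_block_mat (det M \<cdot>\<^sub>m 1\<^sub>m 1) (- rowm n b * adj_mat M) (0\<^sub>m n 1) (det M \<cdot>\<^sub>m 1\<^sub>m n)"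
proof -
  note adj = adj_mat[OF M]
  have "four_block_mat (1\<^sub>m 1) (- rowm n b) (colm n a) M *
     four_block_mat (det M \<cdot>\<^sub>m 1\<^sub>m 1) (0\<^sub>m 1 n) (- colm n (adj_mat M *\<^sub>v a)) (adj_mat M)
    = four_block_mat (1\<^sub>m 1 * (det M \<cdot>\<^sub>m 1\<^sub>m 1) + (- rowm n b) * (- colm n (adj_mat M *\<^sub>v a)))
       (1\<^sub>m 1 * 0\<^sub>m 1 n + (- rowm n b) * adj_mat M)
       (colm n a * (det M \<cdot>\<^sub>m 1\<^sub>m 1) + M * (- colm n (adj_mat M *\<^sub>v a)))
       (colm n a * 0\<^sub>m 1 n + M * adj_mat M)"
    by (rule mult_four_block_mat[where ?nr2.0=n], insert M adj, auto)
  also have "\<dots> = four_block_mat (det M \<cdot>\<^sub>m 1\<^sub>m 1) (- rowm n b * adj_mat M) (0\<^sub>m n 1) (det M \<cdot>\<^sub>m 1\<^sub>m n)"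
  proof (rule cong_four_block_mat)
    have "M * (- colm n (adj_mat M *\<^sub>v a)) = - (M * colm n (adj_mat M *\<^sub>v a))"
      by (rule uminus_mult_right_mat, insert M, simp add: colm_def)
    also have "M * colm n (adj_mat M *\<^sub>v a) = colm n (M *\<^sub>v (adj_mat M *\<^sub>v a))"
      by (rule mult_colm[OF M], insert adj a, auto)
    also have "M *\<^sub>v (adj_mat M *\<^sub>v a) = (M * adj_mat M) *\<^sub>v a"
      using M adj a by (metis assoc_mult_mat_vec)
    also have "\<dots> = det M \<cdot>\<^sub>v a" using adj a by auto
    finally have e: "M * (- colm n (adj_mat M *\<^sub>v a)) = - colm n (det M \<cdot>\<^sub>v a)" .
    show "colm n a * (det M \<cdot>\<^sub>m 1\<^sub>m 1) + M * (- colm n (adj_mat M *\<^sub>v a)) = 0\<^sub>m n 1"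
      unfolding e by (rule eq_matI, insert a, auto simp: colm_def scalar_prod_def)
    show "1\<^sub>m 1 * (det M \<cdot>\<^sub>m 1\<^sub>m 1) + (- rowm n b) * (- colm n (adj_mat M *\<^sub>v a)) = det M \<cdot>\<^sub>m 1\<^sub>m 1"
      using y adj a b by (intro eq_matI, auto simp: colm_def rowm_def scalar_prod_def sum_negf)
    show "1\<^sub>m 1 * 0\<^sub>m 1 n + (- rowm n b) * adj_mat M = - rowm n b * adj_mat M"
      using adj by (intro eq_matI, auto simp: rowm_def)
    show "colm n a * 0\<^sub>m 1 n + M * adj_mat M = det M \<cdot>\<^sub>m 1\<^sub>m n"
      using adj by (intro eq_matI, auto simp: colm_def scalar_prod_def)
  qed
  finally show ?thesis .
qed
lemma det_rk:
  fixes M :: "'a::idom mat"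
  assumes M: "M \<in> carrier_mat n n" and a: "a \<in> carrier_vec n" and b: "b \<in> carrier_vec n"
  and y: "b \<bullet> (adj_mat M *\<^sub>v a) = 0" and d0: "det M \<noteq> 0"
  shows "det (M + rk n a b) = det M"
proof -
  note adj = adj_mat[OF M]
  define d where "d = det M"
  let ?L = "four_block_mat (1\<^sub>m 1) (- rowm n b) (colm n a) M"
  let ?P1 = "four_block_mat (1\<^sub>m 1) (0\<^sub>m 1 n) (colm n a) (M + rk n a b)"
  let ?P2 = "four_block_mat (1\<^sub>m 1) (- rowm n b) (0\<^sub>m n 1) (1\<^sub>m n)"
  let ?Q = "four_block_mat (det M \<cdot>\<^sub>m 1\<^sub>m 1) (0\<^sub>m 1 n) (- colm n (adj_mat M *\<^sub>v a)) (adj_mat M)"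
  let ?R = "four_block_mat (det M \<cdot>\<^sub>m 1\<^sub>m 1) (- rowm n b * adj_mat M) (0\<^sub>m n 1) (det M \<cdot>\<^sub>m 1\<^sub>m n)"
  have cP1: "?P1 \<in> carrier_mat (1+n) (1+n)" using M by (intro four_block_carrier_mat, auto)
  have cP2: "?P2 \<in> carrier_mat (1+n) (1+n)" by (intro four_block_carrier_mat, auto)
  have cL: "?L \<in> carrier_mat (1+n) (1+n)" using M by (intro four_block_carrier_mat, auto)
  have cQ: "?Q \<in> carrier_mat (1+n) (1+n)" using adj by (intro four_block_carrier_mat, auto)
  have "det ?L = det ?P1 * det ?P2" unfolding F1[OF M a b] by (rule det_mult[OF cP1 cP2])
  also have "det ?P1 = det (1\<^sub>m 1) * det (M + rk n a b)"
    by (rule det_four_block_mat_upper_right_zero, insert M, auto)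
  also have "det ?P2 = det (1\<^sub>m 1) * det (1\<^sub>m n :: 'a mat)"
    by (rule det_four_block_mat_lower_left_zero, auto simp: rowm_def)
  finally have L1: "det ?L = det (M + rk n a b)" by simp
  have "det ?L * det ?Q = det ?R" unfolding F2[OF M a b y, symmetric] by (rule det_mult[OF cL cQ, symmetric])
  moreover have "det ?Q = det (det M \<cdot>\<^sub>m 1\<^sub>m 1) * det (adj_mat M)"
    by (rule det_four_block_mat_upper_right_zero, insert adj, auto)
  moreover have "det ?R = det (det M \<cdot>\<^sub>m 1\<^sub>m 1) * det (det M \<cdot>\<^sub>m 1\<^sub>m n)"
    by (rule det_four_block_mat_lower_left_zero, insert adj, auto simp: rowm_def)
  ultimately have e1: "det (M + rk n a b) * (d * det (adj_mat M)) = d * d ^ n"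
    using L1 by (simp add: d_def)
  have "det M * det (adj_mat M) = det (det M \<cdot>\<^sub>m 1\<^sub>m n)"
    using det_mult[OF M adj(1)] adj(2) by simp
  hence e2: "d * det (adj_mat M) = d ^ n" by (simp add: d_def)
  have "d ^ n \<noteq> 0" using d0 by (simp add: d_def)
  hence nz: "d * det (adj_mat M) \<noteq> 0" using e2 d0 by (simp add: d_def)
  have "det (M + rk n a b) * (d * det (adj_mat M)) = d * (d * det (adj_mat M))"
    using e1 e2 by simp
  thus ?thesis using nz by (simp add: d_def)
qed
lemma smult_mat_vec': assumes "B \<in> carrier_mat n m" "x \<in> carrier_vec m"
  shows "(k \<cdot>\<^sub>m B) *\<^sub>v x = (k::'a::comm_ring_1) \<cdot>\<^sub>v (B *\<^sub>v x)"
  by (rule eq_vecI, insert assms, auto simp: scalar_prod_def sum_distrib_left ac_simps)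

lemma mat_vec_uminus: assumes "B \<in> carrier_mat n m" "x \<in> carrier_vec m"
  shows "B *\<^sub>v (- x) = - (B *\<^sub>v (x::'a::comm_ring_1 vec))"
  by (rule eq_vecI, insert assms, auto simp: scalar_prod_def sum_negf)

lemma powA: assumes A: "A \<in> carrier_mat n n"
  shows "A ^\<^sub>m Suc k = A * A ^\<^sub>m k"
proof (induct k)
  case 0 then show ?case using A by simp
next
  case (Suc k)
  have "A ^\<^sub>m Suc (Suc k) = (A * A ^\<^sub>m k) * A" using Suc by simp
  also have "\<dots> = A * (A ^\<^sub>m k * A)" by (rule assoc_mult_mat[of _ n n _ n _ n], insert A, auto)
  finally show ?case by simp
qed

lemma const_hom: "comm_ring_hom (\<lambda>x::'a::comm_ring_1. [:x:])"
  by (unfold_locales, auto)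

lemma const_mmv: assumes "A \<in> carrier_mat nr n" "v \<in> carrier_vec n"
  shows "map_vec (\<lambda>x::'a::comm_ring_1. [:x:]) (A *\<^sub>v v) = map_mat (\<lambda>x. [:x:]) A *\<^sub>v map_vec (\<lambda>x. [:x:]) v"
proof -
  interpret h: comm_ring_hom "\<lambda>x::'a. [:x:]" by (rule const_hom)
  show ?thesis by (rule h.mult_mat_vec_hom[OF assms])
qed

lemma const_sum: "(\<Sum>i\<in>S. [:(f i::'a::comm_ring_1):]) = [: \<Sum>i\<in>S. f i :]"
proof -
  interpret h: comm_ring_hom "\<lambda>x::'a. [:x:]" by (rule const_hom)
  show ?thesis by (rule h.hom_sum[symmetric])
qed

lemma core0:
  fixes A :: "'a::field mat"
  assumes A: "A \<in> carrier_mat n n" and u: "u \<in> carrier_vec n" and w: "w \<in> carrier_vec n"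
  and iso: "\<And>k. w \<bullet> ((A ^\<^sub>m k) *\<^sub>v u) = 0"
  shows "det (char_poly_matrix A + rk n (map_vec (\<lambda>x. [:x:]) u) (map_vec (\<lambda>x. [:x:]) w)) = det (char_poly_matrix A)"
proof -
  define M where "M = char_poly_matrix A"
  define X :: "'a poly" where "X = [:0,1:]"
  define Y where "Y = adj_mat M"
  define chi where "chi = det M"
  define L where "L = map_vec (\<lambda>x::'a. [:x:])"
  define b where "b = L w"
  have M: "M \<in> carrier_mat n n" unfolding M_def using A by simp
  note adj = adj_mat[OF M, folded Y_def chi_def]
  have Y: "Y \<in> carrier_mat n n" using adj by simp
  have b: "b \<in> carrier_vec n" unfolding b_def L_def using w by simp
  have hA: "map_mat (\<lambda>x. [:x:]) A = X \<cdot>\<^sub>m 1\<^sub>m n - M"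
    unfolding M_def X_def char_poly_matrix_def using A by (intro eq_matI, auto)
  have YA: "Y * map_mat (\<lambda>x. [:x:]) A = X \<cdot>\<^sub>m Y - chi \<cdot>\<^sub>m 1\<^sub>m n"
  proof -
    have "Y * map_mat (\<lambda>x. [:x:]) A = Y * (X \<cdot>\<^sub>m 1\<^sub>m n) - Y * M" unfolding hA
      by (rule mult_minus_distrib_mat[of _ n n], insert Y M, auto)
    also have "Y * (X \<cdot>\<^sub>m 1\<^sub>m n) = X \<cdot>\<^sub>m Y"
      using mult_smult_distrib[OF Y one_carrier_mat, of X] Y by simp
    finally show ?thesis using adj by simp
  qed
  have key: "b \<bullet> (Y *\<^sub>v L (A *\<^sub>v z)) = X * (b \<bullet> (Y *\<^sub>v L z)) - chi * [: w \<bullet> z :]"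
    if z: "z \<in> carrier_vec n" for z
  proof -
    have Lz: "L z \<in> carrier_vec n" using z unfolding L_def by simp
    have "L (A *\<^sub>v z) = map_mat (\<lambda>x. [:x:]) A *\<^sub>v L z"
      unfolding L_def by (rule const_mmv[OF A z])
    hence "Y *\<^sub>v L (A *\<^sub>v z) = (Y * map_mat (\<lambda>x. [:x:]) A) *\<^sub>v L z"
      using Y A Lz by simp
    also have "\<dots> = (X \<cdot>\<^sub>m Y) *\<^sub>v L z - (chi \<cdot>\<^sub>m 1\<^sub>m n) *\<^sub>v L z" unfolding YA
      by (rule minus_mult_distrib_mat_vec[of _ n n], insert Y Lz, auto)
    also have "\<dots> = X \<cdot>\<^sub>v (Y *\<^sub>v L z) - chi \<cdot>\<^sub>v L z"
      using smult_mat_vec'[OF Y Lz] smult_mat_vec'[OF one_carrier_mat Lz] Lz by simp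
    finally have e: "Y *\<^sub>v L (A *\<^sub>v z) = X \<cdot>\<^sub>v (Y *\<^sub>v L z) - chi \<cdot>\<^sub>v L z" .
    have "b \<bullet> L z = (\<Sum>i\<in>{0..<n}. [:w $ i:] * [:z $ i:])"
      unfolding scalar_prod_def b_def L_def using z w by simp
    also have "\<dots> = (\<Sum>i\<in>{0..<n}. [:w $ i * z $ i:])" by (simp add: ac_simps)
    also have "\<dots> = [: \<Sum>i\<in>{0..<n}. w $ i * z $ i :]" by (rule const_sum)
    also have "\<dots> = [: w \<bullet> z :]" unfolding scalar_prod_def using z w by simp
    finally have bz: "b \<bullet> L z = [: w \<bullet> z :]" .
    show ?thesis unfolding e
      by (subst scalar_prod_minus_distrib[of _ n], insert b Y Lz, auto simp: bz)
  qed
  define g where "g k = b \<bullet> (Y *\<^sub>v L ((A ^\<^sub>m k) *\<^sub>v u))" for k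
  have gS: "g (Suc k) = X * g k" for k
  proof -
    have "(A ^\<^sub>m Suc k) *\<^sub>v u = A *\<^sub>v ((A ^\<^sub>m k) *\<^sub>v u)"
      unfolding powA[OF A] by (rule assoc_mult_mat_vec[of _ n n _ n], insert A u, auto)
    moreover have "(A ^\<^sub>m k) \<in> carrier_mat n n" using A by simp
    hence "(A ^\<^sub>m k) *\<^sub>v u \<in> carrier_vec n" using u by simp
    ultimately show ?thesis unfolding g_def using key[of "(A ^\<^sub>m k) *\<^sub>v u"] iso[of k] by simp
  qed
  have gk: "g k = X ^ k * g 0" for k
    by (induct k, auto simp: gS)
  define D where "D = (\<Sum>ij\<in>{..<n} \<times> {..<n}. degree (Y $$ ij))"
  have deg: "degree (b \<bullet> (Y *\<^sub>v L z)) \<le> D" if z: "z \<in> carrier_vec n" for z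
  proof -
    have "b \<bullet> (Y *\<^sub>v L z) = (\<Sum>i\<in>{0..<n}. [: w $ i :] * (\<Sum>j\<in>{0..<n}. Y $$ (i,j) * [: z $ j :]))"
      unfolding scalar_prod_def b_def L_def using Y z w by (auto intro!: sum.cong simp: scalar_prod_def)
    also have "degree \<dots> \<le> D"
    proof (rule degree_sum_le, simp)
      fix i assume i: "i \<in> {0..<n}"
      have "degree ([: w $ i :] * (\<Sum>j\<in>{0..<n}. Y $$ (i,j) * [: z $ j :])) \<le> degree [: w $ i :] + degree (\<Sum>j\<in>{0..<n}. Y $$ (i,j) * [: z $ j :])"
        by (rule degree_mult_le)
      also have "degree (\<Sum>j\<in>{0..<n}. Y $$ (i,j) * [: z $ j :]) \<le> D"
      proof (rule degree_sum_le, simp)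
        fix j assume j: "j \<in> {0..<n}"
        have "degree (Y $$ (i,j) * [: z $ j :]) \<le> degree (Y $$ (i,j)) + degree [: z $ j :]"
          by (rule degree_mult_le)
        also have "\<dots> = degree (Y $$ (i,j))" by simp
        also have "\<dots> \<le> D" unfolding D_def
          by (rule member_le_sum[of "(i,j)" _ "\<lambda>ij. degree (Y $$ ij)", simplified], insert i j, auto)
        finally show "degree (Y $$ (i,j) * [: z $ j :]) \<le> D" .
      qed
      finally show "degree ([: w $ i :] * (\<Sum>j\<in>{0..<n}. Y $$ (i,j) * [: z $ j :])) \<le> D" by simp
    qed
    finally show ?thesis .
  qed
  have g0: "g 0 = 0"
  proof (rule ccontr)
    assume nz: "g 0 \<noteq> 0"
    have "degree (g (Suc D)) = degree (X ^ Suc D * g 0)" by (simp only: gk[of "Suc D"])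
    also have "\<dots> = degree (X ^ Suc D) + degree (g 0)"
      by (rule degree_mult_eq, insert nz, auto simp: X_def)
    also have "degree (X ^ Suc D) = Suc D" unfolding X_def by (simp add: degree_power_eq)
    finally have "degree (g (Suc D)) > D" by simp
    moreover have "degree (g (Suc D)) \<le> D" unfolding g_def
      by (rule deg, rule mult_mat_vec_carrier[OF pow_carrier_mat[OF A] u])
    ultimately show False by simp
  qed
  have chi0: "chi \<noteq> 0"
    using degree_monic_char_poly[OF A] unfolding chi_def M_def char_poly_def by auto
  have "det (M + rk n (L u) b) = det M"
    by (rule det_rk[OF M _ b], insert g0 u chi0 A, auto simp: g_def Y_def chi_def L_def)
  thus ?thesis unfolding M_def L_def b_def .
qed
lemma core:
  fixes A :: "'a::field mat"
  assumes A: "A \<in> carrier_mat n n" and u: "u \<in> carrier_vec n" and w: "w \<in> carrier_vec n"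
  and iso: "\<And>k. w \<bullet> ((A ^\<^sub>m k) *\<^sub>v u) = 0"
  shows "char_poly (A + rk n u w) = char_poly A"
proof -
  have iso': "w \<bullet> ((A ^\<^sub>m k) *\<^sub>v (- u)) = 0" for k
    using iso[of k] A u w by (simp add: mat_vec_uminus[OF pow_carrier_mat[OF A] u])
  have "char_poly_matrix (A + rk n u w) = char_poly_matrix A + rk n (map_vec (\<lambda>x. [:x:]) (- u)) (map_vec (\<lambda>x. [:x:]) w)"
    unfolding char_poly_matrix_def rk_def using A u w by (intro eq_matI, auto simp: algebra_simps)
  thus ?thesis unfolding char_poly_def using core0[OF A _ w iso'] u by simp
qed

lemma rk_mult_vec: assumes "x \<in> carrier_vec n" "a \<in> carrier_vec n"
  shows "rk n a b *\<^sub>v x = (b \<bullet> x) \<cdot>\<^sub>v (a::'a::comm_ring_1 vec)"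
  by (rule eq_vecI, insert assms, auto simp: rk_def scalar_prod_def sum_distrib_left ac_simps)

lemma R2: assumes "B \<in> carrier_mat n n" "a \<in> carrier_vec n"
  shows "B * rk n a b = rk n (B *\<^sub>v a) (b::'a::comm_ring_1 vec)"
  by (rule eq_matI, insert assms, auto simp: rk_def scalar_prod_def sum_distrib_right sum_distrib_left ac_simps)

lemma R3: assumes "B \<in> carrier_mat n n" "b \<in> carrier_vec n"
  shows "rk n a b * B = rk n a (transpose_mat B *\<^sub>v (b::'a::comm_ring_1 vec))"
  by (rule eq_matI, insert assms, auto simp: rk_def scalar_prod_def sum_distrib_left ac_simps)

lemma R4: assumes "a \<in> carrier_vec n" shows "k \<cdot>\<^sub>m rk n a b = rk n (k \<cdot>\<^sub>v a) (b::'a::comm_ring_1 vec)"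
  by (rule eq_matI, insert assms, auto simp: rk_def ac_simps)

lemma pow_pert: fixes A :: "'a::comm_ring_1 mat"
  assumes A: "A \<in> carrier_mat n n" and u: "u \<in> carrier_vec n" and v: "v \<in> carrier_vec n"
  and iso: "\<And>k. w \<bullet> ((A ^\<^sub>m k) *\<^sub>v v) = 0"
  shows "((A + rk n u w) ^\<^sub>m k) *\<^sub>v v = (A ^\<^sub>m k) *\<^sub>v v"
proof (induct k)
  case 0 thus ?case using A v by (simp add: rk_def)
next
  case (Suc k)
  have A1: "A + rk n u w \<in> carrier_mat n n" using A by simp
  have c: "(A ^\<^sub>m k) *\<^sub>v v \<in> carrier_vec n" by (rule mult_mat_vec_carrier[OF pow_carrier_mat[OF A] v])
  have "((A + rk n u w) ^\<^sub>m Suc k) *\<^sub>v v = (A + rk n u w) *\<^sub>v (((A + rk n u w) ^\<^sub>m k) *\<^sub>v v)"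
    unfolding powA[OF A1] by (rule assoc_mult_mat_vec[of _ n n _ n], insert A1 v, auto)
  also have "\<dots> = (A + rk n u w) *\<^sub>v ((A ^\<^sub>m k) *\<^sub>v v)" using Suc by simp
  also have "\<dots> = A *\<^sub>v ((A ^\<^sub>m k) *\<^sub>v v) + rk n u w *\<^sub>v ((A ^\<^sub>m k) *\<^sub>v v)"
    by (rule add_mult_distrib_mat_vec[OF A _ c], simp)
  also have "rk n u w *\<^sub>v ((A ^\<^sub>m k) *\<^sub>v v) = 0\<^sub>v n"
    unfolding rk_mult_vec[OF c u] iso by (rule eq_vecI, insert u, auto)
  also have "A *\<^sub>v ((A ^\<^sub>m k) *\<^sub>v v) = (A ^\<^sub>m Suc k) *\<^sub>v v"
    unfolding powA[OF A] by (rule assoc_mult_mat_vec[symmetric, of _ n n _ n], insert A v, auto)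
  finally show ?case using mult_mat_vec_carrier[OF pow_carrier_mat[OF A] v, of "Suc k"] by simp
qed

lemma case1:
  fixes A :: "'a::field mat"
  assumes A: "A \<in> carrier_mat n n" and v: "v \<in> carrier_vec n" and w: "w \<in> carrier_vec n"
  and iso: "\<And>k. w \<bullet> ((A ^\<^sub>m k) *\<^sub>v v) = 0"
  shows "char_poly (A + c \<cdot>\<^sub>m rk n v w) = char_poly A"
proof -
  have "char_poly (A + rk n (c \<cdot>\<^sub>v v) w) = char_poly A"
  proof (rule core[OF A _ w])
    fix k
    show "w \<bullet> ((A ^\<^sub>m k) *\<^sub>v (c \<cdot>\<^sub>v v)) = 0"
      using iso[of k] A v w by (simp add: mult_mat_vec[OF pow_carrier_mat[OF A] v])
  qed (insert v, simp)
  thus ?thesis by (simp add: R4[OF v])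
qed

lemma case3:
  fixes A :: "'a::field mat"
  assumes A: "A \<in> carrier_mat n n" and v: "v \<in> carrier_vec n" and w: "w \<in> carrier_vec n"
  and iso: "\<And>k. w \<bullet> ((A ^\<^sub>m k) *\<^sub>v v) = 0"
  shows "char_poly (A + c \<cdot>\<^sub>m (A * rk n v w) + c \<cdot>\<^sub>m (rk n v w * A)) = char_poly A"
proof -
  define A1 where "A1 = A + rk n (c \<cdot>\<^sub>v (A *\<^sub>v v)) w"
  have A1: "A1 \<in> carrier_mat n n" unfolding A1_def using A by simp
  have Av: "A *\<^sub>v v \<in> carrier_vec n" using A v by simp
  have isoS: "w \<bullet> ((A ^\<^sub>m k) *\<^sub>v (A *\<^sub>v v)) = 0" for k
  proof -
    have "(A ^\<^sub>m k) *\<^sub>v (A *\<^sub>v v) = (A ^\<^sub>m Suc k) *\<^sub>v v"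
      by (simp, rule assoc_mult_mat_vec[symmetric, of _ n n _ n], insert A v, auto)
    thus ?thesis using iso[of "Suc k"] by simp
  qed
  have e1: "char_poly A1 = char_poly A"
  proof (unfold A1_def, rule core[OF A _ w])
    fix k
    show "w \<bullet> ((A ^\<^sub>m k) *\<^sub>v (c \<cdot>\<^sub>v (A *\<^sub>v v))) = 0"
      using isoS[of k] A Av w by (simp add: mult_mat_vec[OF pow_carrier_mat[OF A] Av])
  qed (insert Av, simp)
  have tw: "transpose_mat A *\<^sub>v w \<in> carrier_vec n" using A w by simp
  have e2: "char_poly (A1 + rk n (c \<cdot>\<^sub>v v) (transpose_mat A *\<^sub>v w)) = char_poly A1"
  proof (rule core[OF A1 _ tw])
    fix k
    have "(A1 ^\<^sub>m k) *\<^sub>v v = (A ^\<^sub>m k) *\<^sub>v v"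
      unfolding A1_def by (rule pow_pert[OF A _ v iso], insert Av, simp)
    moreover have "(transpose_mat A *\<^sub>v w) \<bullet> ((A ^\<^sub>m k) *\<^sub>v v) = w \<bullet> (A *\<^sub>v ((A ^\<^sub>m k) *\<^sub>v v))"
      by (rule transpose_vec_mult_scalar[OF A mult_mat_vec_carrier[OF pow_carrier_mat[OF A] v] w])
    moreover have "A *\<^sub>v ((A ^\<^sub>m k) *\<^sub>v v) = (A ^\<^sub>m Suc k) *\<^sub>v v"
      unfolding powA[OF A] by (rule assoc_mult_mat_vec[symmetric, of _ n n _ n], insert A v, auto)
    ultimately show "(transpose_mat A *\<^sub>v w) \<bullet> ((A1 ^\<^sub>m k) *\<^sub>v (c \<cdot>\<^sub>v v)) = 0"
      using iso[of "Suc k"] A1 v tw mult_mat_vec_carrier[OF pow_carrier_mat[OF A] v, of k] by (simp add: mult_mat_vec[OF pow_carrier_mat[OF A1] v])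
  qed (insert v, simp)
  have "A + c \<cdot>\<^sub>m (A * rk n v w) + c \<cdot>\<^sub>m (rk n v w * A) = A1 + rk n (c \<cdot>\<^sub>v v) (transpose_mat A *\<^sub>v w)"
    unfolding A1_def R2[OF A v] R3[OF A w] R4[OF v] R4[OF Av] by (intro eq_matI, insert A v w, auto simp: rk_def)
  thus ?thesis using e1 e2 by simp
qed

theorem lemma6p6:
  fixes G A :: "'a::field mat" and cj :: "'a \<Rightarrow> 'a" and v :: "'a vec" and n :: nat
  assumes char: "(2::'a) \<noteq> 0"
    and cj: "conjugation cj"
    and G: "G \<in> carrier_mat n n"
    and nd: "nondegenerate n G cj"
    and A: "in_g n G cj A"
    and v: "v \<in> carrier_vec n"
    and iso: "\<forall>k::nat. form G cj ((A ^\<^sub>m k) *\<^sub>v v) v = 0"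
  shows
    "((cj \<noteq> id \<and> (\<forall>u\<in>carrier_vec n. \<forall>w\<in>carrier_vec n. form G cj u w = cj (form G cj w u)))
        \<longrightarrow> (\<forall>c. cj c = - c \<longrightarrow> char_poly (A + c \<cdot>\<^sub>m phi n G cj v) = char_poly A))
     \<and> ((cj = id \<and> (\<forall>u\<in>carrier_vec n. \<forall>w\<in>carrier_vec n. form G cj u w = - form G cj w u))
        \<longrightarrow> (\<forall>c. char_poly (A + c \<cdot>\<^sub>m phi n G cj v) = char_poly A))
     \<and> ((cj = id \<and> (\<forall>u\<in>carrier_vec n. \<forall>w\<in>carrier_vec n. form G cj u w = form G cj w u))
        \<longrightarrow> (\<forall>c. char_poly (A + c \<cdot>\<^sub>m (A * phi n G cj v) + c \<cdot>\<^sub>m (phi n G cj v * A)) = char_poly A))"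
  proof -
  define w where "w = G *\<^sub>v map_vec cj v"
  have w: "w \<in> carrier_vec n" unfolding w_def using G v by simp
  have Ac: "A \<in> carrier_mat n n" using A unfolding in_g_def by simp
  have ph: "phi n G cj v = rk n v w"
    unfolding phi_def rk_def form_def w_def[symmetric]
    by (rule eq_matI, insert w, auto simp: ac_simps)
  have iso': "w \<bullet> ((A ^\<^sub>m k) *\<^sub>v v) = 0" for k
  proof -
    have "form G cj ((A ^\<^sub>m k) *\<^sub>v v) v = ((A ^\<^sub>m k) *\<^sub>v v) \<bullet> w"
      unfolding form_def w_def ..
    also have "\<dots> = w \<bullet> ((A ^\<^sub>m k) *\<^sub>v v)"
      by (rule comm_scalar_prod[OF mult_mat_vec_carrier[OF pow_carrier_mat[OF Ac] v] w])
    finally show ?thesis using iso by simp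
  qed
  have c1: "char_poly (A + c \<cdot>\<^sub>m phi n G cj v) = char_poly A" for c
    unfolding ph by (rule case1[OF Ac v w iso'])
  have c3: "char_poly (A + c \<cdot>\<^sub>m (A * phi n G cj v) + c \<cdot>\<^sub>m (phi n G cj v * A)) = char_poly A" for c
    unfolding ph by (rule case3[OF Ac v w iso'])
  show ?thesis by (intro conjI impI allI c1 c3)
qed

end
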